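(* The algebra $\mathcal{A}$ equals the algebra of (noncommutative) polynomials in $U$, $U^{-1}$, $P_{\ge0}$ and $P_0$.
   Context: Let $\{E_k\}_{k\in\mathbb{Z}}$ be the canonical basis of $\ell^2(\mathbb{Z})$, $UE_k=E_{k+1}$, $\mathbb{K}E_k=kE_k$, and $a(\mathbb{K})E_k=a(k)E_k$ for $a:\mathbb{Z}\to\mathbb{C}$. A function $a:\mathbb{Z}\to\mathbb{C}$ is eventually constant if there is $k_0$ such that $a$ is constant on $\{k\ge k_0\}$ and constant on $\{k\le-k_0\}$ (the two constants may differ). $\mathcal{A}$ is the set of finite sums $\sum_nU^na_n(\mathbb{K})$ with each $a_n$ eventually constant. $P_0$ is the orthogonal projection onto $\mathrm{span}\{E_0\}$ and $P_{\ge0}$ the orthogonal projection onto $\overline{\mathrm{span}}\{E_k:k\ge0\}$. *)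

theory Defs
  imports "HOL-Analysis.Analysis"
begin

type_synonym seq = "int \<Rightarrow> complex"
type_synonym op = "seq \<Rightarrow> seq"

text \<open>Vectors of l2(Z) are square-summable sequences; E_k is the indicator of k.\<close>
definition l2 :: "seq set" where
  "l2 = {f. (\<lambda>k. (cmod (f k))^2) summable_on UNIV}"

text \<open>U^n, n an integer: U E_k = E_(k+1), so (U^n f)(k) = f(k - n).\<close>
definition Upow :: "int \<Rightarrow> op" where
  "Upow n f = (\<lambda>k. f (k - n))"

definition multop :: "(int \<Rightarrow> complex) \<Rightarrow> op" where
  "multop a f = (\<lambda>k. a k * f k)"

definition P0 :: op where
  "P0 = multop (\<lambda>k. if k = 0 then 1 else 0)"

definition Pge0 :: op where
  "Pge0 = multop (\<lambda>k. if k \<ge> 0 then 1 else 0)"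

definition eventually_const :: "(int \<Rightarrow> complex) \<Rightarrow> bool" where
  "eventually_const a \<longleftrightarrow> (\<exists>k0. (\<forall>k l. k \<ge> k0 \<longrightarrow> l \<ge> k0 \<longrightarrow> a k = a l)
                                 \<and> (\<forall>k l. k \<le> -k0 \<longrightarrow> l \<le> -k0 \<longrightarrow> a k = a l))"

definition algA :: "op set" where
  "algA = {T. \<exists>N a. finite N \<and> (\<forall>n\<in>N. eventually_const (a n)) \<and>
              T = (\<lambda>f k. \<Sum>n\<in>N. Upow n (multop (a n) f) k)}"

inductive_set polyAlg :: "op set" where
  scalar: "(\<lambda>f. (\<lambda>k. c * f k)) \<in> polyAlg"
| genU: "Upow 1 \<in> polyAlg"
| genUinv: "Upow (-1) \<in> polyAlg"
| genPge0: "Pge0 \<in> polyAlg"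
| genP0: "P0 \<in> polyAlg"
| add: "S \<in> polyAlg \<Longrightarrow> T \<in> polyAlg \<Longrightarrow> (\<lambda>f k. S f k + T f k) \<in> polyAlg"
| mult: "S \<in> polyAlg \<Longrightarrow> T \<in> polyAlg \<Longrightarrow> S \<circ> T \<in> polyAlg"

definition on_l2 :: "op \<Rightarrow> op" where
  "on_l2 T = restrict T l2"

end

theory Submission
  imports Defs
begin

section \<open>polyAlg contains algA\<close>

lemma P_sum:
  assumes "finite N" "\<forall>n\<in>N. G n \<in> polyAlg"
  shows "(\<lambda>f k. \<Sum>n\<in>N. G n f k) \<in> polyAlg"
  using assms
proof (induction N rule: finite_induct)
  case empty
  have e: "(\<lambda>f k. \<Sum>n\<in>{}. G n f k) = (\<lambda>f. (\<lambda>k. 0 * f k))" by (simp add: fun_eq_iff)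
  show ?case unfolding e by (rule polyAlg.scalar)
next
  case (insert x F)
  have "(\<lambda>f k. \<Sum>n\<in>insert x F. G n f k) = (\<lambda>f k. G x f k + (\<lambda>f k. \<Sum>n\<in>F. G n f k) f k)"
    using insert by (simp add: fun_eq_iff)
  then show ?case using insert polyAlg.add by auto
qed

lemma Upow_comp: "Upow m \<circ> Upow n = Upow (m + n)"
  by (simp add: fun_eq_iff Upow_def algebra_simps)

lemma Upow0: "Upow 0 = (\<lambda>f. (\<lambda>k. 1 * f k))"
  by (simp add: fun_eq_iff Upow_def)

lemma Upow_nat: "Upow (int m) \<in> polyAlg"
proof (induction m)
  case 0 show ?case unfolding of_nat_0 minus_zero Upow0 by (rule polyAlg.scalar)
next
  case (Suc m)
  have "Upow (int (Suc m)) = Upow 1 \<circ> Upow (int m)" by (simp add: Upow_comp add.commute)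
  then show ?case using Suc polyAlg.mult polyAlg.genU by metis
qed

lemma Upow_negnat: "Upow (- int m) \<in> polyAlg"
proof (induction m)
  case 0 show ?case unfolding of_nat_0 minus_zero Upow0 by (rule polyAlg.scalar)
next
  case (Suc m)
  have "Upow (- int (Suc m)) = Upow (-1) \<circ> Upow (- int m)" by (simp add: Upow_comp)
  then show ?case using Suc polyAlg.mult polyAlg.genUinv by metis
qed

lemma Upow_in: "Upow n \<in> polyAlg"
proof (cases "n \<ge> 0")
  case True
  then have "n = int (nat n)" by simp
  then show ?thesis using Upow_nat by metis
next
  case False
  then have "n = - int (nat (-n))" by simp
  then show ?thesis using Upow_negnat by metis
qed

lemma mult_add: "multop a \<in> polyAlg \<Longrightarrow> multop b \<in> polyAlg \<Longrightarrow> multop (\<lambda>k. a k + b k) \<in> polyAlg"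
proof -
  assume "multop a \<in> polyAlg" "multop b \<in> polyAlg"
  then have "(\<lambda>f k. multop a f k + multop b f k) \<in> polyAlg" by (rule polyAlg.add)
  moreover have "(\<lambda>f k. multop a f k + multop b f k) = multop (\<lambda>k. a k + b k)"
    by (simp add: fun_eq_iff multop_def algebra_simps)
  ultimately show ?thesis by simp
qed

lemma mult_scale: "multop a \<in> polyAlg \<Longrightarrow> multop (\<lambda>k. c * a k) \<in> polyAlg"
proof -
  assume "multop a \<in> polyAlg"
  then have "(\<lambda>f. (\<lambda>k. c * f k)) \<circ> multop a \<in> polyAlg" by (rule polyAlg.mult[OF polyAlg.scalar])
  moreover have "(\<lambda>f. (\<lambda>k. c * f k)) \<circ> multop a = multop (\<lambda>k. c * a k)"
    by (simp add: fun_eq_iff multop_def algebra_simps)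
  ultimately show ?thesis by simp
qed

lemma mult_const: "multop (\<lambda>k. c) \<in> polyAlg"
proof -
  have "multop (\<lambda>k. c) = (\<lambda>f. (\<lambda>k. c * f k))" by (simp add: fun_eq_iff multop_def)
  then show ?thesis using polyAlg.scalar by simp
qed

lemma mult_sum:
  assumes "finite S" "\<forall>j\<in>S. multop (g j) \<in> polyAlg"
  shows "multop (\<lambda>k. \<Sum>j\<in>S. g j k) \<in> polyAlg"
  using assms
proof (induction S rule: finite_induct)
  case empty
  then show ?case using mult_const[of 0] by simp
next
  case (insert x F)
  then show ?case using mult_add[of "g x" "\<lambda>k. \<Sum>j\<in>F. g j k"] by simp
qed

lemma ind_eq: "multop (\<lambda>k. if k = j then 1 else 0) \<in> polyAlg"
proof -
  have "multop (\<lambda>k. if k = j then 1 else 0) = Upow j \<circ> (P0 \<circ> Upow (-j))"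
    by (simp add: fun_eq_iff multop_def P0_def Upow_def)
  then show ?thesis using Upow_in polyAlg.genP0 polyAlg.mult by metis
qed

lemma ind_ge: "multop (\<lambda>k. if k \<ge> j then 1 else 0) \<in> polyAlg"
proof -
  have "multop (\<lambda>k. if k \<ge> j then 1 else 0) = Upow j \<circ> (Pge0 \<circ> Upow (-j))"
    by (simp add: fun_eq_iff multop_def Pge0_def Upow_def)
  then show ?thesis using Upow_in polyAlg.genPge0 polyAlg.mult by metis
qed

lemma ind_le: "multop (\<lambda>k. if k \<le> j then 1 else 0) \<in> polyAlg"
proof -
  have "multop (\<lambda>k. 1 + (-1) * (if k \<ge> j + 1 then 1 else 0)) \<in> polyAlg"
    by (rule mult_add[OF mult_const mult_scale[OF ind_ge]])
  moreover have "(\<lambda>k::int. 1 + (-1) * (if k \<ge> j + 1 then 1 else 0)) = (\<lambda>k. if k \<le> j then (1::complex) else 0)"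
    by (auto simp: fun_eq_iff)
  ultimately show ?thesis by simp
qed

lemma ec_mult:
  assumes "eventually_const a"
  shows "multop a \<in> polyAlg"
proof -
  obtain k0 where k0: "\<forall>k l. k \<ge> k0 \<longrightarrow> l \<ge> k0 \<longrightarrow> a k = a l"
     "\<forall>k l. k \<le> -k0 \<longrightarrow> l \<le> -k0 \<longrightarrow> a k = a l"
    using assms unfolding eventually_const_def by blast
  define K where "K = max k0 1"
  have K1: "K \<ge> 1" "K \<ge> k0" unfolding K_def by auto
  have eq: "a = (\<lambda>k. a K * (if k \<ge> K then 1 else 0) + (a (-K) * (if k \<le> -K then 1 else 0)
      + (\<Sum>j\<in>{-K<..<K}. a j * (if k = j then 1 else 0))))"
  proof
    fix k
    have s: "(\<Sum>j\<in>{-K<..<K}. a j * (if k = j then 1 else 0)) = (if k \<in> {-K<..<K} then a k else 0)"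
      by (simp add: if_distrib sum.delta cong: if_cong)
    show "a k = a K * (if k \<ge> K then 1 else 0) + (a (-K) * (if k \<le> -K then 1 else 0)
      + (\<Sum>j\<in>{-K<..<K}. a j * (if k = j then 1 else 0)))"
    proof (cases "k \<ge> K")
      case True
      have "a k = a K" using k0(1)[rule_format, of k K] K1 True by simp
      then show ?thesis using True K1 by (simp add: s)
    next
      case F1: False
      show ?thesis
      proof (cases "k \<le> -K")
        case True
        have "a k = a (-K)" using k0(2)[rule_format, of k "-K"] K1 True by simp
        then show ?thesis using True F1 K1 by (simp add: s)
      next
        case False
        then show ?thesis using F1 by (simp add: s)
      qed
    qed
  qed
  have h: "multop (\<lambda>k. a K * (if k \<ge> K then 1 else 0) + (a (-K) * (if k \<le> -K then 1 else 0)
      + (\<Sum>j\<in>{-K<..<K}. a j * (if k = j then 1 else 0)))) \<in> polyAlg"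
    by (intro mult_add mult_scale ind_ge ind_le mult_sum) (auto intro: mult_scale ind_eq)
  show ?thesis by (subst eq) (rule h)
qed

lemma algA_sub: "algA \<subseteq> polyAlg"
proof
  fix T assume "T \<in> algA"
  then obtain N a where N: "finite N" "\<forall>n\<in>N. eventually_const (a n)"
    "T = (\<lambda>f k. \<Sum>n\<in>N. Upow n (multop (a n) f) k)" unfolding algA_def by blast
  have "(\<lambda>f k. \<Sum>n\<in>N. (Upow n \<circ> multop (a n)) f k) \<in> polyAlg"
  proof (rule P_sum[OF N(1)])
    show "\<forall>n\<in>N. Upow n \<circ> multop (a n) \<in> polyAlg"
      using N(2) by (simp add: polyAlg.mult[OF Upow_in ec_mult])
  qed
  then show "T \<in> polyAlg" using N by simp
qed

section \<open>algA contains polyAlg\<close>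

lemma ec_const: "eventually_const (\<lambda>k. c)"
  unfolding eventually_const_def by auto

lemma ec_binop:
  assumes "eventually_const a" "eventually_const b"
  shows "eventually_const (\<lambda>k. h (a k) (b k))"
proof -
  obtain k0 where k0: "\<forall>k l. k \<ge> k0 \<longrightarrow> l \<ge> k0 \<longrightarrow> a k = a l" "\<forall>k l. k \<le> -k0 \<longrightarrow> l \<le> -k0 \<longrightarrow> a k = a l"
    using assms(1) unfolding eventually_const_def by blast
  obtain k1 where k1: "\<forall>k l. k \<ge> k1 \<longrightarrow> l \<ge> k1 \<longrightarrow> b k = b l" "\<forall>k l. k \<le> -k1 \<longrightarrow> l \<le> -k1 \<longrightarrow> b k = b l"
    using assms(2) unfolding eventually_const_def by blast
  have "(\<forall>k l. k \<ge> max k0 k1 \<longrightarrow> l \<ge> max k0 k1 \<longrightarrow> h (a k) (b k) = h (a l) (b l))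
      \<and> (\<forall>k l. k \<le> -max k0 k1 \<longrightarrow> l \<le> -max k0 k1 \<longrightarrow> h (a k) (b k) = h (a l) (b l))"
  proof (intro conjI allI impI)
    fix k l assume "k \<ge> max k0 k1" "l \<ge> max k0 k1"
    then have "a k = a l" "b k = b l" using k0(1)[rule_format, of k l] k1(1)[rule_format, of k l] by simp_all
    then show "h (a k) (b k) = h (a l) (b l)" by simp
  next
    fix k l assume "k \<le> -max k0 k1" "l \<le> -max k0 k1"
    then have "a k = a l" "b k = b l" using k0(2)[rule_format, of k l] k1(2)[rule_format, of k l] by simp_all
    then show "h (a k) (b k) = h (a l) (b l)" by simp
  qed
  then show ?thesis unfolding eventually_const_def by blast
qed

lemma ec_add:
  assumes "eventually_const a" "eventually_const b"
  shows "eventually_const (\<lambda>k. a k + b k)"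
  using ec_binop[OF assms, of "(+)"] by simp

lemma ec_mul:
  assumes "eventually_const a" "eventually_const b"
  shows "eventually_const (\<lambda>k. a k * b k)"
  using ec_binop[OF assms, of "(*)"] by simp

lemma ec_shift:
  assumes "eventually_const a"
  shows "eventually_const (\<lambda>k. a (k + n))"
proof -
  obtain k0 where k0: "\<forall>k l. k \<ge> k0 \<longrightarrow> l \<ge> k0 \<longrightarrow> a k = a l" "\<forall>k l. k \<le> -k0 \<longrightarrow> l \<le> -k0 \<longrightarrow> a k = a l"
    using assms(1) unfolding eventually_const_def by blast
  have "(\<forall>k l. k \<ge> \<bar>k0\<bar> + \<bar>n\<bar> \<longrightarrow> l \<ge> \<bar>k0\<bar> + \<bar>n\<bar> \<longrightarrow> a (k + n) = a (l + n))
      \<and> (\<forall>k l. k \<le> -(\<bar>k0\<bar> + \<bar>n\<bar>) \<longrightarrow> l \<le> -(\<bar>k0\<bar> + \<bar>n\<bar>) \<longrightarrow> a (k + n) = a (l + n))"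
  proof (intro conjI allI impI)
    fix k l assume "k \<ge> \<bar>k0\<bar> + \<bar>n\<bar>" "l \<ge> \<bar>k0\<bar> + \<bar>n\<bar>"
    then show "a (k + n) = a (l + n)" using k0(1)[rule_format, of "k + n" "l + n"] by linarith
  next
    fix k l assume "k \<le> -(\<bar>k0\<bar> + \<bar>n\<bar>)" "l \<le> -(\<bar>k0\<bar> + \<bar>n\<bar>)"
    then show "a (k + n) = a (l + n)" using k0(2)[rule_format, of "k + n" "l + n"] by linarith
  qed
  then show ?thesis unfolding eventually_const_def by blast
qed

lemma ec_sum:
  assumes "finite S" "\<forall>i\<in>S. eventually_const (g i)"
  shows "eventually_const (\<lambda>k. \<Sum>i\<in>S. g i k)"
  using assms
  by (induction S rule: finite_induct) (auto intro: ec_add simp: ec_const)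

lemma gen_sum:
  fixes I :: "'i set"
  assumes "finite I" "\<forall>i\<in>I. eventually_const (c i)"
  shows "(\<lambda>f k. \<Sum>i\<in>I. c i (k - m i) * f (k - m i)) \<in> algA"
proof -
  define N where "N = m ` I"
  define a where "a p = (\<lambda>j. \<Sum>i\<in>{i\<in>I. m i = p}. c i j)" for p
  have "finite N" using assms N_def by simp
  moreover have "\<forall>n\<in>N. eventually_const (a n)"
    unfolding a_def using assms by (auto intro!: ec_sum)
  moreover have "(\<lambda>f k. \<Sum>i\<in>I. c i (k - m i) * f (k - m i)) = (\<lambda>f k. \<Sum>n\<in>N. Upow n (multop (a n) f) k)"
  proof (intro ext)
    fix f k
    have "(\<Sum>i\<in>I. c i (k - m i) * f (k - m i)) = (\<Sum>n\<in>m ` I. \<Sum>i\<in>{i\<in>I. m i = n}. c i (k - m i) * f (k - m i))"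
      using assms(1) by (rule sum.image_gen)
    also have "\<dots> = (\<Sum>n\<in>N. Upow n (multop (a n) f) k)"
      unfolding N_def Upow_def multop_def a_def
      by (intro sum.cong refl) (auto simp: sum_distrib_right intro!: sum.cong)
    finally show "(\<Sum>i\<in>I. c i (k - m i) * f (k - m i)) = (\<Sum>n\<in>N. Upow n (multop (a n) f) k)" .
  qed
  ultimately show ?thesis unfolding algA_def by blast
qed

lemma algA_form:
  "T \<in> algA \<Longrightarrow> \<exists>N a. finite N \<and> (\<forall>n\<in>N. eventually_const (a n)) \<and>
              T = (\<lambda>f k. \<Sum>n\<in>N. a n (k - n) * f (k - n))"
  unfolding algA_def Upow_def multop_def by blast

lemma single_in: "eventually_const a \<Longrightarrow> (\<lambda>f k. a (k - n) * f (k - n)) \<in> algA"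
  using gen_sum[of "{()}" "\<lambda>_. a" "\<lambda>_. n"] by simp

lemma algA_add:
  assumes "S \<in> algA" "T \<in> algA"
  shows "(\<lambda>f k. S f k + T f k) \<in> algA"
proof -
  obtain M b where M: "finite M" "\<forall>n\<in>M. eventually_const (b n)" "S = (\<lambda>f k. \<Sum>n\<in>M. b n (k - n) * f (k - n))"
    using algA_form[OF assms(1)] by blast
  obtain N a where N: "finite N" "\<forall>n\<in>N. eventually_const (a n)" "T = (\<lambda>f k. \<Sum>n\<in>N. a n (k - n) * f (k - n))"
    using algA_form[OF assms(2)] by blast
  define I where "I = Inl ` M \<union> Inr ` N"
  define c where "c i = (case i of Inl n \<Rightarrow> b n | Inr n \<Rightarrow> a n)" for i
  define m where "m i = (case i of Inl n \<Rightarrow> n | Inr n \<Rightarrow> n)" for i :: "int + int"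
  have "(\<lambda>f k. \<Sum>i\<in>I. c i (k - m i) * f (k - m i)) \<in> algA"
    using M N by (intro gen_sum) (auto simp: I_def c_def)
  moreover have "(\<lambda>f k. \<Sum>i\<in>I. c i (k - m i) * f (k - m i)) = (\<lambda>f k. S f k + T f k)"
  proof (intro ext)
    fix f k
    have "(\<Sum>i\<in>I. c i (k - m i) * f (k - m i)) = (\<Sum>i\<in>Inl ` M. c i (k - m i) * f (k - m i)) + (\<Sum>i\<in>Inr ` N. c i (k - m i) * f (k - m i))"
      unfolding I_def using M N by (intro sum.union_disjoint) auto
    also have "\<dots> = S f k + T f k"
      using M N by (simp add: sum.reindex c_def m_def)
    finally show "(\<Sum>i\<in>I. c i (k - m i) * f (k - m i)) = S f k + T f k" .
  qed
  ultimately show ?thesis by simp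
qed

lemma algA_comp:
  assumes "S \<in> algA" "T \<in> algA"
  shows "S \<circ> T \<in> algA"
proof -
  obtain M b where M: "finite M" "\<forall>n\<in>M. eventually_const (b n)" "S = (\<lambda>f k. \<Sum>n\<in>M. b n (k - n) * f (k - n))"
    using algA_form[OF assms(1)] by blast
  obtain N a where N: "finite N" "\<forall>n\<in>N. eventually_const (a n)" "T = (\<lambda>f k. \<Sum>n\<in>N. a n (k - n) * f (k - n))"
    using algA_form[OF assms(2)] by blast
  define c where "c i = (\<lambda>j. b (fst i) (j + snd i) * a (snd i) j)" for i
  define m where "m i = fst i + snd i" for i :: "int \<times> int"
  have "(\<lambda>f k. \<Sum>i\<in>M \<times> N. c i (k - m i) * f (k - m i)) \<in> algA"
    using M N by (intro gen_sum) (auto simp: c_def intro!: ec_mul ec_shift)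
  moreover have "(\<lambda>f k. \<Sum>i\<in>M \<times> N. c i (k - m i) * f (k - m i)) = S \<circ> T"
  proof (intro ext)
    fix f k
    have "(\<Sum>i\<in>M \<times> N. c i (k - m i) * f (k - m i)) = (\<Sum>p\<in>M. \<Sum>q\<in>N. c (p, q) (k - m (p, q)) * f (k - m (p, q)))"
      by (simp add: sum.cartesian_product case_prod_unfold)
    also have "\<dots> = (S \<circ> T) f k"
      using M N by (simp add: sum_distrib_left c_def m_def algebra_simps)
    finally show "(\<Sum>i\<in>M \<times> N. c i (k - m i) * f (k - m i)) = (S \<circ> T) f k" .
  qed
  ultimately show ?thesis by simp
qed

lemma poly_sub: "polyAlg \<subseteq> algA"
proof
  fix T assume "T \<in> polyAlg"
  then show "T \<in> algA"
  proof (induction rule: polyAlg.induct)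
    case (scalar c)
    then show ?case using single_in[OF ec_const, of c 0] by simp
  next
    case genU
    have "Upow 1 = (\<lambda>f k. (\<lambda>_. 1) (k - 1) * f (k - 1))" by (simp add: fun_eq_iff Upow_def)
    then show ?case using single_in[OF ec_const, of 1 1] by simp
  next
    case genUinv
    have "Upow (-1) = (\<lambda>f k. (\<lambda>_. 1) (k - (-1)) * f (k - (-1)))" by (simp add: fun_eq_iff Upow_def)
    then show ?case using single_in[OF ec_const, of 1 "-1"] by simp
  next
    case genPge0
    have e: "eventually_const (\<lambda>k. if k \<ge> 0 then 1 else 0)"
      unfolding eventually_const_def by (rule exI[of _ 1]) auto
    have "Pge0 = (\<lambda>f k. (\<lambda>k. if k \<ge> 0 then 1 else 0) (k - 0) * f (k - 0))"
      by (simp add: fun_eq_iff Pge0_def multop_def)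
    then show ?case using single_in[OF e, of 0] by simp
  next
    case genP0
    have e: "eventually_const (\<lambda>k. if k = 0 then 1 else 0)"
      unfolding eventually_const_def by (rule exI[of _ 1]) auto
    have "P0 = (\<lambda>f k. (\<lambda>k. if k = 0 then 1 else 0) (k - 0) * f (k - 0))"
      by (simp add: fun_eq_iff P0_def multop_def)
    then show ?case using single_in[OF e, of 0] by simp
  next
    case (add S T)
    then show ?case using algA_add by blast
  next
    case (mult S T)
    then show ?case using algA_comp by blast
  qed
qed

theorem mainTheorem4:
  shows "on_l2 ` algA = on_l2 ` polyAlg"
  using algA_sub poly_sub by (simp add: subset_antisym)

end
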